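(* Let $E$ be a finite dimensional Banach space and let $(C_n)_{n=1}^{\infty}$ be a nested sequence ($C_{n+1}\subseteq C_n$) of closed convex subsets of $E$ such that $\bigcap_{n=1}^{\infty}C_n=\{p\}$ for some point $p\in E$. Then $diam(C_n)\to 0$ as $n\to\infty$.
   Context: Diameters are taken with respect to the norm of $E$ (and may be infinite). *)

theory Defs
  imports "HOL-Analysis.Analysis"
begin

text \<open>Extended-real diameter with respect to the norm (possibly infinite);
  the library's diameter is 0 for unbounded sets, so we use this instead.\<close>
definition ediam :: "'a::metric_space set \<Rightarrow> ereal" where
  "ediam S = (SUP x\<in>S. SUP y\<in>S. ereal (dist x y))"

end

theory Submission imports Defs begin

lemma BW_span:
  fixes B :: "'a::real_normed_vector set"
  assumes "finite B"
  shows "\<forall>f::nat\<Rightarrow>'a. (\<forall>n. f n \<in> span B) \<longrightarrow> bounded (range f) \<longrightarrow>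
     (\<exists>l r. strict_mono r \<and> l \<in> span B \<and> (f \<circ> r) \<longlonglongrightarrow> l)"
  using assms
proof (induction B rule: finite_induct)
  case empty
  show ?case
  proof (intro allI impI)
    fix f :: "nat \<Rightarrow> 'a" assume "\<forall>n. f n \<in> span {}" "bounded (range f)"
    then have "\<And>n. f n = 0" by simp
    then show "\<exists>l r. strict_mono r \<and> l \<in> span {} \<and> (f \<circ> r) \<longlonglongrightarrow> l"
      by (rule_tac x=0 in exI, rule_tac x=id in exI) (auto simp: strict_mono_def o_def)
  qed
next
  case (insert b B)
  show ?case
  proof (cases "b \<in> span B")
    case True
    then show ?thesis using insert.IH by (simp add: span_redundant)
  next
    case False
    have clo: "closed (span B)"
    proof (rule closed_sequential_limits[THEN iffD2], intro allI impI, elim conjE)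
      fix g l assume g: "\<forall>n. g n \<in> span B" and gl: "g \<longlonglongrightarrow> l"
      have "bounded (range g)" using gl by (simp add: convergent_imp_bounded)
      then obtain l' r where r: "strict_mono r" "l' \<in> span B" "(g \<circ> r) \<longlonglongrightarrow> l'"
        using insert.IH g by blast
      have "(g \<circ> r) \<longlonglongrightarrow> l" using gl r(1) by (rule LIMSEQ_subseq_LIMSEQ)
      then have "l = l'" using r(3) LIMSEQ_unique by blast
      then show "l \<in> span B" using r(2) by simp
    qed
    define d where "d = infdist b (span B)"
    have "span B \<noteq> {}" using span_zero by blast
    then have dpos: "d > 0" using False clo in_closed_iff_infdist_zero[of "span B" b]
      by (simp add: d_def order_less_le infdist_nonneg)
    have key: "\<bar>t\<bar> * d \<le> norm (t *\<^sub>R b + y)" if y: "y \<in> span B" for t y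
    proof (cases "t = 0")
      case True then show ?thesis by simp
    next
      case False
      have m: "- (1/t) *\<^sub>R y \<in> span B" using y by (simp add: span_neg span_scale)
      have "d \<le> dist b (- (1/t) *\<^sub>R y)" unfolding d_def by (rule infdist_le[OF m])
      also have "dist b (- (1/t) *\<^sub>R y) = norm (b + (1/t) *\<^sub>R y)" by (simp add: dist_norm)
      finally have "\<bar>t\<bar> * d \<le> \<bar>t\<bar> * norm (b + (1/t) *\<^sub>R y)"
        by (simp add: mult_left_mono)
      also have "\<dots> = norm (t *\<^sub>R (b + (1/t) *\<^sub>R y))" by simp
      also have "t *\<^sub>R (b + (1/t) *\<^sub>R y) = t *\<^sub>R b + y" using False
        by (simp add: scaleR_add_right)
      finally show ?thesis .
    qed
    show ?thesis
    proof (intro allI impI)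
      fix f :: "nat \<Rightarrow> 'a" assume fs: "\<forall>n. f n \<in> span (insert b B)"
        and fb: "bounded (range f)"
      obtain M where M: "\<And>n. norm (f n) \<le> M"
        using fb by (auto simp: bounded_iff)
      have "\<forall>n. \<exists>t. f n - t *\<^sub>R b \<in> span B" using fs by (simp add: span_breakdown_eq)
      then obtain t where t: "\<And>n. f n - t n *\<^sub>R b \<in> span B" by metis
      define y where "y n = f n - t n *\<^sub>R b" for n
      have y: "\<And>n. y n \<in> span B" using t y_def by simp
      have fe: "f n = t n *\<^sub>R b + y n" for n by (simp add: y_def)
      have tb: "\<bar>t n\<bar> \<le> M / d" for n
      proof -
        have "\<bar>t n\<bar> * d \<le> M" using key[OF y[of n], of "t n"] M[of n] fe[of n] by simp
        then show ?thesis using dpos by (simp add: field_simps)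
      qed
      have "bounded (range t)" using tb by (auto simp: bounded_iff intro!: exI[of _ "M/d"])
      then obtain lt r1 where r1: "strict_mono r1" "(t \<circ> r1) \<longlonglongrightarrow> lt"
        using bounded_imp_convergent_subsequence by blast
      have yb: "norm (y n) \<le> M + M / d * norm b" for n
      proof -
        have "norm (y n) \<le> norm (f n) + norm (t n *\<^sub>R b)" unfolding y_def by (rule norm_triangle_ineq4)
        also have "\<dots> \<le> M + M / d * norm b" using M[of n] tb[of n]
          using mult_right_mono[OF tb[of n] norm_ge_zero[of b]] by (intro add_mono) auto
        finally show ?thesis .
      qed
      have "bounded (range (y \<circ> r1))" using yb by (auto simp: bounded_iff intro!: exI[of _ "M + M / d * norm b"])
      then obtain ly r2 where r2: "strict_mono r2" "ly \<in> span B" "(y \<circ> r1 \<circ> r2) \<longlonglongrightarrow> ly"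
        using insert.IH y by (metis comp_apply)
      have "(t \<circ> r1 \<circ> r2) \<longlonglongrightarrow> lt" using r1(2) r2(1) by (rule LIMSEQ_subseq_LIMSEQ)
      then have "(\<lambda>n. (t \<circ> r1 \<circ> r2) n *\<^sub>R b + (y \<circ> r1 \<circ> r2) n) \<longlonglongrightarrow> lt *\<^sub>R b + ly"
        using r2(3) by (intro tendsto_intros)
      moreover have "(\<lambda>n. (t \<circ> r1 \<circ> r2) n *\<^sub>R b + (y \<circ> r1 \<circ> r2) n) = f \<circ> (r1 \<circ> r2)"
        using fe by (auto simp: o_def)
      moreover have "lt *\<^sub>R b + ly \<in> span (insert b B)"
        using r2(2) by (meson span_add span_base span_mono span_scale insertI1 subset_insertI subsetD)
      moreover have "strict_mono (r1 \<circ> r2)" using r1(1) r2(1) by (rule strict_mono_o)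
      ultimately show "\<exists>l r. strict_mono r \<and> l \<in> span (insert b B) \<and> (f \<circ> r) \<longlonglongrightarrow> l"
        by metis
    qed
  qed
qed


lemma nested_le:
  assumes nested: "\<And>n. n \<ge> 1 \<Longrightarrow> C (Suc n) \<subseteq> C n" and "1 \<le> N" "N \<le> n"
  shows "C n \<subseteq> C N"
  using assms(3) 
proof (induction n rule: dec_induct)
  case base then show ?case by simp
next
  case (step m) then show ?case using nested[of m] assms(2) by auto
qed

theorem proposition3p1:
  fixes C :: "nat \<Rightarrow> 'a::banach set" and p :: 'a
  assumes findim: "\<exists>B. finite B \<and> span B = (UNIV :: 'a set)"
    and closed: "\<And>n. n \<ge> 1 \<Longrightarrow> closed (C n)"
    and convex: "\<And>n. n \<ge> 1 \<Longrightarrow> convex (C n)"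
    and nested: "\<And>n. n \<ge> 1 \<Longrightarrow> C (Suc n) \<subseteq> C n"
    and inter: "(\<Inter>n\<in>{1..}. C n) = {p}"
  shows "(\<lambda>n. ediam (C n)) \<longlonglongrightarrow> 0"
proof (rule order_tendstoI)
  have pC: "p \<in> C n" if "n \<ge> 1" for n using inter that by auto
  fix a :: ereal assume "a < 0"
  show "\<forall>\<^sub>F n in sequentially. a < ediam (C n)"
  proof (rule eventually_sequentiallyI[of 1])
    fix n :: nat assume n: "1 \<le> n"
    have "ereal (dist p p) \<le> ediam (C n)" unfolding ediam_def
      using pC[OF n] by (intro SUP_upper2[of p] SUP_upper) auto
    then show "a < ediam (C n)" using \<open>a < 0\<close> zero_ereal_def by (metis dist_self order_less_le_trans)
  qed
next
  have pC: "p \<in> C n" if "n \<ge> 1" for n using inter that by auto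
  fix a :: ereal assume a: "0 < a"
  define e where "e = (if a = \<infinity> then 1 else real_of_ereal a / 3)"
  have e: "e > 0" "ereal (2 * e) < a"
    using a by (cases a; auto simp: e_def)+
  show "\<forall>\<^sub>F n in sequentially. ediam (C n) < a"
  proof (cases "\<exists>N\<ge>1. \<forall>x\<in>C N. dist p x < e")
    case True
    then obtain N where N: "N \<ge> 1" "\<And>x. x \<in> C N \<Longrightarrow> dist p x < e" by blast
    show ?thesis
    proof (rule eventually_sequentiallyI[of N])
      fix n assume n: "N \<le> n"
      have sub: "C n \<subseteq> C N" using nested_le[of C N n, OF nested N(1) n] .
      have "ediam (C n) \<le> ereal (2 * e)" unfolding ediam_def
      proof (intro SUP_least)
        fix x y assume "x \<in> C n" "y \<in> C n"
        then have "dist p x < e" "dist p y < e" using sub N(2) by auto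
        then have "dist x y \<le> 2 * e" using dist_triangle[of x y p] by (simp add: dist_commute)
        then show "ereal (dist x y) \<le> ereal (2 * e)" by simp
      qed
      then show "ediam (C n) < a" using e(2) by simp
    qed
  next
    case False
    then have ex: "\<forall>N\<ge>1. \<exists>x\<in>C N. e \<le> dist p x" by (auto simp: not_less)
    have "\<forall>N\<ge>1. \<exists>q\<in>C N. dist p q = e"
    proof (intro allI impI)
      fix N :: nat assume N: "N \<ge> 1"
      then obtain x where x: "x \<in> C N" "e \<le> dist p x" using ex by blast
      define u where "u = e / norm (x - p)"
      have np: "norm (x - p) > 0" using x(2) e(1) by (metis dist_eq_0_iff dist_norm less_le_not_le norm_minus_commute zero_less_norm_iff)
      have u: "0 \<le> u" "u \<le> 1" using np x(2) e(1) by (auto simp: u_def dist_norm norm_minus_commute field_simps)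
      have "(1 - u) *\<^sub>R p + u *\<^sub>R x \<in> C N"
        using convex[OF N] pC[OF N] x(1) u by (simp add: convex_def)
      moreover have "(1 - u) *\<^sub>R p + u *\<^sub>R x = p + u *\<^sub>R (x - p)" by (simp add: algebra_simps)
      moreover have "dist p (p + u *\<^sub>R (x - p)) = e"
        using np u e(1) by (simp add: dist_norm u_def)
      ultimately show "\<exists>q\<in>C N. dist p q = e" by metis
    qed
    then obtain q where q: "\<And>N. N \<ge> 1 \<Longrightarrow> q N \<in> C N \<and> dist p (q N) = e" by metis
    define s where "s n = q (Suc n)" for n
    obtain B where B: "finite B" "span B = (UNIV :: 'a set)" using findim by blast
    have "bounded (range s)"
      using q by (auto simp: bounded_def s_def intro!: exI[of _ p] exI[of _ e])
    then obtain l r where r: "strict_mono r" "(s \<circ> r) \<longlonglongrightarrow> l"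
      using BW_span[OF B(1)] B(2) by blast
    have lC: "l \<in> C m" if m: "m \<ge> 1" for m
    proof -
      have "(\<lambda>n. (s \<circ> r) (n + m)) \<longlonglongrightarrow> l" using r(2) by (rule LIMSEQ_ignore_initial_segment)
      moreover have "(s \<circ> r) (n + m) \<in> C m" for n
      proof -
        have "n + m \<le> r (n + m)" using r(1) by (rule seq_suble)
        then have "C (Suc (r (n + m))) \<subseteq> C m" using nested_le[of C m, OF nested m] by simp
        moreover have "q (Suc (r (n + m))) \<in> C (Suc (r (n + m)))" using q[of "Suc (r (n+m))"] by simp
        ultimately show ?thesis unfolding s_def o_def by blast
      qed
      ultimately show ?thesis by (metis closed_sequentially[OF closed[OF m]])
    qed
    have "(\<lambda>n. dist p ((s \<circ> r) n)) \<longlonglongrightarrow> dist p l" using r(2) by (intro tendsto_intros)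
    moreover have "(\<lambda>n. dist p ((s \<circ> r) n)) = (\<lambda>n. e)" using q by (simp add: s_def)
    ultimately have "dist p l = e" by (metis LIMSEQ_unique tendsto_const)
    moreover have "l \<in> (\<Inter>n\<in>{1..}. C n)" using lC by simp
    then have "l = p" using inter by (metis singletonD)
    ultimately show ?thesis using e(1) by simp
  qed
qed

end
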